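(* Let $\mathcal{P}=(P_1,\dots,P_n)$ be convex polytopes in $\mathbb{R}^d$ each containing the origin, let $\mu\in\mathbb{R}^d$, and let $\Delta=\Delta(\mathcal{P};\mu)$. Suppose there is a line $\ell$ through $\mu$ that does not intersect $P_\sigma$ for any $\sigma\in\Delta$. Then $\mathrm{ctd}(\Delta)<d$.
   Context: For $\sigma\subseteq[n]$ write $P_\sigma=\sum_{i\in\sigma}P_i$ (Minkowski sum), with $P_\emptyset=\{0\}$; the Minkowski complex $\Delta(\mathcal{P};\mu)$ is the simplicial complex on vertex set $[n]$ whose faces are the $\sigma\subseteq[n]$ with $\mu\notin P_\sigma$. The convex threshold dimension $\mathrm{ctd}(\Delta)$ of a simplicial complex $\Delta$ on vertex set $[n]$ is the smallest $d$ such that $\Delta=\Delta(\mathcal{Q};\nu)$ for some family $\mathcal{Q}=(Q_1,\dots,Q_n)$ of convex bodies (equivalently, convex polytopes) in $\mathbb{R}^d$ containing the origin and some $\nu\in\mathbb{R}^d$. *)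

theory Defs
  imports "HOL-Analysis.Analysis" "HOL-Library.Function_Algebras"
begin

definition msum :: "(nat \<Rightarrow> 'a::comm_monoid_add set) \<Rightarrow> nat set \<Rightarrow> 'a set" where
  "msum P \<sigma> = {(\<Sum>i\<in>\<sigma>. x i) | x. \<forall>i\<in>\<sigma>. x i \<in> P i}"

definition minkowski_complex :: "(nat \<Rightarrow> 'a::comm_monoid_add set) \<Rightarrow> 'a \<Rightarrow> nat \<Rightarrow> nat set set" where
  "minkowski_complex P \<mu> n = {\<sigma>. \<sigma> \<subseteq> {1..n} \<and> \<mu> \<notin> msum P \<sigma>}"

text \<open>Concrete model of R^k: real sequences supported on coordinates 1..k.\<close>
definition Rk :: "nat \<Rightarrow> (nat \<Rightarrow> real) set" where
  "Rk k = {x. \<forall>i. i \<notin> {1..k} \<longrightarrow> x i = 0}"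

definition polytope_Rk :: "nat \<Rightarrow> (nat \<Rightarrow> real) set \<Rightarrow> bool" where
  "polytope_Rk k Q \<longleftrightarrow> (\<exists>V. finite V \<and> V \<subseteq> Rk k \<and>
     Q = {(\<lambda>j. \<Sum>v\<in>V. c v * v j) | c. (\<forall>v\<in>V. 0 \<le> c v) \<and> sum c V = 1})"

definition realizable_in :: "nat set set \<Rightarrow> nat \<Rightarrow> nat \<Rightarrow> bool" where
  "realizable_in \<Delta> n k \<longleftrightarrow> (\<exists>Q \<nu>. \<nu> \<in> Rk k \<and>
     (\<forall>i\<in>{1..n}. polytope_Rk k (Q i) \<and> (0::nat\<Rightarrow>real) \<in> Q i) \<and>
     \<Delta> = minkowski_complex Q \<nu> n)"

definition ctd :: "nat set set \<Rightarrow> nat \<Rightarrow> nat" where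
  "ctd \<Delta> n = (LEAST k. realizable_in \<Delta> n k)"

end

theory Submission
  imports Defs
begin

lemma regroup:
  fixes f :: "'a \<Rightarrow> nat \<Rightarrow> real"
  assumes fin: "finite V"
  shows "{(\<lambda>j. \<Sum>v\<in>V. c v * f v j) | c. (\<forall>v\<in>V. 0 \<le> c v) \<and> sum c V = 1}
       = {(\<lambda>j. \<Sum>w\<in>f ` V. c w * w j) | c. (\<forall>w\<in>f ` V. 0 \<le> c w) \<and> sum c (f ` V) = 1}"
proof (intro set_eqI iffI)
  fix z assume "z \<in> {(\<lambda>j. \<Sum>v\<in>V. c v * f v j) | c. (\<forall>v\<in>V. 0 \<le> c v) \<and> sum c V = 1}"
  then obtain c where z: "z = (\<lambda>j. \<Sum>v\<in>V. c v * f v j)" and c0: "\<forall>v\<in>V. 0 \<le> c v" and c1: "sum c V = 1"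
    by blast
  define c' where "c' w = sum c {v\<in>V. f v = w}" for w
  have "\<forall>w\<in>f ` V. 0 \<le> c' w" using c0 by (auto simp: c'_def intro: sum_nonneg)
  moreover have "sum c' (f ` V) = 1"
    using sum.image_gen[OF fin, of c f] c1 by (simp add: c'_def)
  moreover have "z = (\<lambda>j. \<Sum>w\<in>f ` V. c' w * w j)"
  proof
    fix j
    have "z j = (\<Sum>w\<in>f ` V. \<Sum>v\<in>{v\<in>V. f v = w}. c v * f v j)"
      using sum.image_gen[OF fin, of "\<lambda>v. c v * f v j" f] z by simp
    also have "\<dots> = (\<Sum>w\<in>f ` V. c' w * w j)"
      unfolding c'_def sum_distrib_right by (intro sum.cong refl) auto
    finally show "z j = (\<Sum>w\<in>f ` V. c' w * w j)" .
  qed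
  ultimately show "z \<in> {(\<lambda>j. \<Sum>w\<in>f ` V. c w * w j) | c. (\<forall>w\<in>f ` V. 0 \<le> c w) \<and> sum c (f ` V) = 1}"
    by blast
next
  fix z assume "z \<in> {(\<lambda>j. \<Sum>w\<in>f ` V. c w * w j) | c. (\<forall>w\<in>f ` V. 0 \<le> c w) \<and> sum c (f ` V) = 1}"
  then obtain c where z: "z = (\<lambda>j. \<Sum>w\<in>f ` V. c w * w j)" and c0: "\<forall>w\<in>f ` V. 0 \<le> c w"
    and c1: "sum c (f ` V) = 1" by blast
  define r where "r = inv_into V f"
  have rV: "r w \<in> V" "f (r w) = w" if "w \<in> f ` V" for w
    using that by (auto simp: r_def inv_into_into f_inv_into_f)
  define c' where "c' v = (if v = r (f v) then c (f v) else 0)" for v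
  have inner: "(\<Sum>v\<in>{v\<in>V. f v = w}. c' v * g v) = c w * g (r w)" if "w \<in> f ` V" for w and g :: "'a \<Rightarrow> real"
  proof -
    have "(\<Sum>v\<in>{v\<in>V. f v = w}. c' v * g v) = (\<Sum>v\<in>{v\<in>V. f v = w}. if v = r w then c w * g v else 0)"
      by (intro sum.cong refl) (auto simp: c'_def)
    also have "\<dots> = c w * g (r w)"
      using rV[OF that] fin by (simp add: sum.delta)
    finally show ?thesis .
  qed
  have "\<forall>v\<in>V. 0 \<le> c' v" using c0 by (auto simp: c'_def)
  moreover have "sum c' V = 1"
  proof -
    have "sum c' V = (\<Sum>w\<in>f ` V. \<Sum>v\<in>{v\<in>V. f v = w}. c' v * 1)"
      using sum.image_gen[OF fin, of c' f] by simp
    also have "\<dots> = sum c (f ` V)" using inner[of _ "\<lambda>_. 1", simplified] by (intro sum.cong refl) auto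
    finally show ?thesis using c1 by simp
  qed
  moreover have "z = (\<lambda>j. \<Sum>v\<in>V. c' v * f v j)"
  proof
    fix j
    have "(\<Sum>v\<in>V. c' v * f v j) = (\<Sum>w\<in>f ` V. \<Sum>v\<in>{v\<in>V. f v = w}. c' v * f v j)"
      using sum.image_gen[OF fin, of "\<lambda>v. c' v * f v j" f] by simp
    also have "\<dots> = (\<Sum>w\<in>f ` V. c w * w j)"
      using inner[of _ "\<lambda>v. f v j"] rV by (intro sum.cong refl) auto
    finally show "z j = (\<Sum>v\<in>V. c' v * f v j)" using z by simp
  qed
  ultimately show "z \<in> {(\<lambda>j. \<Sum>v\<in>V. c v * f v j) | c. (\<forall>v\<in>V. 0 \<le> c v) \<and> sum c V = 1}"
    by blast
qed

lemma fun_sum_apply: "(\<Sum>i\<in>S. g i) x = (\<Sum>i\<in>S. (g i x :: 'b::comm_monoid_add))"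
  by (induction S rule: infinite_finite_induct) auto

theorem lemma6:
  fixes P :: "nat \<Rightarrow> (real ^ 'd) set" and \<mu> :: "real ^ 'd" and n :: nat
  assumes "\<forall>i\<in>{1..n}. polytope (P i) \<and> 0 \<in> P i"
    and "\<exists>v. v \<noteq> 0 \<and> (\<forall>\<sigma>\<in>minkowski_complex P \<mu> n.
            {\<mu> + t *\<^sub>R v | t. True} \<inter> msum P \<sigma> = {})"
  shows "ctd (minkowski_complex P \<mu> n) n < CARD('d)"
proof -
  obtain v :: "real ^ 'd" where v0: "v \<noteq> 0" and line: "\<forall>\<sigma>\<in>minkowski_complex P \<mu> n.
            {\<mu> + t *\<^sub>R v | t. True} \<inter> msum P \<sigma> = {}"
    using assms(2) by blast
  define W where "W = {x :: real ^ 'd. v \<bullet> x = 0}"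
  define m where "m = CARD('d) - 1"
  have subW: "subspace W" unfolding W_def by (rule subspace_hyperplane)
  obtain B where BW: "B \<subseteq> W" and Bind: "independent B" and Bcard: "card B = dim W"
    and Bspan: "span B = W"
    using orthonormal_basis_subspace[OF subW] by metis
  have finB: "finite B" using Bind independent_imp_finite by blast
  have "card B = m" using Bcard dim_hyperplane[OF v0] by (simp add: W_def m_def)
  then obtain b where bb: "bij_betw b {1..m} B"
    using ex_bij_betw_nat_finite_1[OF finB] by metis
  define L :: "real ^ 'd \<Rightarrow> nat \<Rightarrow> real" where
    "L x = (\<lambda>j. if j \<in> {1..m} then x \<bullet> b j else 0)" for x
  have Lsum: "L (sum g S) = (\<Sum>i\<in>S. L (g i))" for g :: "nat \<Rightarrow> real ^ 'd" and S
  proof (rule ext)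
    fix j show "L (sum g S) j = (\<Sum>i\<in>S. L (g i)) j"
      by (cases "j \<in> {1..m}") (auto simp: L_def fun_sum_apply inner_sum_left)
  qed
  have Lcomb: "L (\<Sum>x\<in>V. u x *\<^sub>R x) = (\<lambda>j. \<Sum>x\<in>V. u x * L x j)" for u and V :: "(real ^ 'd) set"
  proof (rule ext)
    fix j show "L (\<Sum>x\<in>V. u x *\<^sub>R x) j = (\<Sum>x\<in>V. u x * L x j)"
      by (cases "j \<in> {1..m}") (auto simp: L_def inner_sum_left)
  qed
  have L0: "L 0 = 0" by (rule ext) (simp add: L_def)
  have LRk: "L x \<in> Rk m" for x by (simp add: L_def Rk_def)
  define Q where "Q i = L ` P i" for i
  have k1: "L y \<in> msum Q \<sigma>" if hy: "y \<in> msum P \<sigma>" for y \<sigma>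
  proof -
    obtain x where x: "\<forall>i\<in>\<sigma>. x i \<in> P i" "y = (\<Sum>i\<in>\<sigma>. x i)"
      using hy unfolding msum_def by blast
    have "L y = (\<Sum>i\<in>\<sigma>. L (x i))" using x(2) Lsum by simp
    moreover have "\<forall>i\<in>\<sigma>. L (x i) \<in> Q i" using x(1) by (auto simp: Q_def)
    ultimately show ?thesis unfolding msum_def by blast
  qed
  have k2: "\<exists>y\<in>msum P \<sigma>. L y = z" if hz: "z \<in> msum Q \<sigma>" for z \<sigma>
  proof -
    obtain y' where y': "\<forall>i\<in>\<sigma>. y' i \<in> Q i" "z = (\<Sum>i\<in>\<sigma>. y' i)"
      using hz unfolding msum_def by blast
    define x where "x i = (SOME p. p \<in> P i \<and> L p = y' i)" for i
    have x: "x i \<in> P i \<and> L (x i) = y' i" if "i \<in> \<sigma>" for i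
    proof -
      have "y' i \<in> L ` P i" using y'(1) that by (simp add: Q_def)
      then obtain p where p: "p \<in> P i" "y' i = L p" by (rule imageE)
      have "\<exists>p. p \<in> P i \<and> L p = y' i" using p by (intro exI[of _ p]) simp
      then show ?thesis unfolding x_def by (rule someI_ex[of "\<lambda>p. p \<in> P i \<and> L p = y' i"])
    qed
    have "(\<Sum>i\<in>\<sigma>. x i) \<in> msum P \<sigma>" unfolding msum_def
    proof (intro CollectI exI[of _ x] conjI refl)
      show "\<forall>i\<in>\<sigma>. x i \<in> P i" using x by blast
    qed
    moreover have "L (\<Sum>i\<in>\<sigma>. x i) = z"
    proof -
      have "L (\<Sum>i\<in>\<sigma>. x i) = (\<Sum>i\<in>\<sigma>. L (x i))" by (rule Lsum)
      also have "\<dots> = (\<Sum>i\<in>\<sigma>. y' i)" using x by (intro sum.cong) auto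
      finally show ?thesis using y'(2) by simp
    qed
    ultimately show ?thesis by blast
  qed
  have k3: "\<exists>t. y = \<mu> + t *\<^sub>R v" if "L y = L \<mu>" for y
  proof -
    define x where "x = y - \<mu>"
    have xb: "x \<bullet> c = 0" if hc: "c \<in> B" for c
    proof -
      obtain j where j: "j \<in> {1..m}" "c = b j" using bb hc by (auto simp: bij_betw_def)
      have "L y j = L \<mu> j" using \<open>L y = L \<mu>\<close> by simp
      then show ?thesis using j by (simp add: L_def x_def inner_diff_left)
    qed
    define t where "t = (x \<bullet> v) / (v \<bullet> v)"
    define z where "z = x - t *\<^sub>R v"
    have vv: "v \<bullet> v \<noteq> 0" using v0 by simp
    have "v \<bullet> z = v \<bullet> x - t * (v \<bullet> v)" by (simp add: z_def inner_diff_right)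
    also have "\<dots> = 0" using vv by (simp add: t_def inner_commute)
    finally have "v \<bullet> z = 0" .
    then have zW: "z \<in> span B" using Bspan by (simp add: W_def)
    have "orthogonal x z" by (rule orthogonal_to_span[OF zW]) (simp add: orthogonal_def xb)
    then have xz: "x \<bullet> z = 0" by (simp add: orthogonal_def)
    have "z \<bullet> z = x \<bullet> z - t * (v \<bullet> z)" by (simp add: z_def inner_diff_left)
    then have "z \<bullet> z = 0" using xz \<open>v \<bullet> z = 0\<close> by simp
    then have "z = 0" by simp
    then show ?thesis unfolding z_def x_def by (intro exI[of _ t]) (simp add: algebra_simps)
  qed
  have Delta: "minkowski_complex P \<mu> n = minkowski_complex Q (L \<mu>) n"
  proof (rule set_eqI)
    fix \<sigma>
    show "\<sigma> \<in> minkowski_complex P \<mu> n \<longleftrightarrow> \<sigma> \<in> minkowski_complex Q (L \<mu>) n"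
    proof
      assume s: "\<sigma> \<in> minkowski_complex P \<mu> n"
      have "L \<mu> \<notin> msum Q \<sigma>"
      proof
        assume "L \<mu> \<in> msum Q \<sigma>"
        then obtain y where y: "y \<in> msum P \<sigma>" "L y = L \<mu>" using k2 by blast
        obtain t where "y = \<mu> + t *\<^sub>R v" using k3[OF y(2)] by blast
        then show False using line s y(1) by blast
      qed
      then show "\<sigma> \<in> minkowski_complex Q (L \<mu>) n"
        using s by (simp add: minkowski_complex_def)
    next
      assume "\<sigma> \<in> minkowski_complex Q (L \<mu>) n"
      then show "\<sigma> \<in> minkowski_complex P \<mu> n"
        using k1 by (auto simp: minkowski_complex_def)
    qed
  qed
  have poly: "polytope_Rk m (Q i)" if hp: "polytope (P i)" for i
  proof -
    obtain V where V: "finite V" "P i = convex hull V"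
      using hp unfolding polytope_def by blast
    let ?S = "{(\<lambda>j. \<Sum>x\<in>V. c x * L x j) | c. (\<forall>x\<in>V. 0 \<le> c x) \<and> sum c V = 1}"
    have "Q i = ?S"
    proof (rule set_eqI, rule iffI)
      fix z assume "z \<in> Q i"
      then obtain y where y: "y \<in> convex hull V" "z = L y" unfolding Q_def V(2) by (rule imageE)
      then obtain u where u: "\<forall>x\<in>V. 0 \<le> u x" "sum u V = 1" "(\<Sum>x\<in>V. u x *\<^sub>R x) = y"
        unfolding convex_hull_finite[OF V(1)] by blast
      have "z = (\<lambda>j. \<Sum>x\<in>V. u x * L x j)" using y(2) u(3) Lcomb by metis
      then show "z \<in> ?S" using u(1,2) by (intro CollectI exI[of _ u] conjI)
    next
      fix z assume "z \<in> ?S"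
      then obtain c where c: "z = (\<lambda>j. \<Sum>x\<in>V. c x * L x j)" "\<forall>x\<in>V. 0 \<le> c x" "sum c V = 1"
        by blast
      have "(\<Sum>x\<in>V. c x *\<^sub>R x) \<in> convex hull V"
        unfolding convex_hull_finite[OF V(1)] using c(2,3) by (intro CollectI exI[of _ c] conjI refl)
      moreover have "z = L (\<Sum>x\<in>V. c x *\<^sub>R x)" using c(1) Lcomb by metis
      ultimately show "z \<in> Q i" unfolding Q_def V(2) by (rule rev_image_eqI)
    qed
    also have "\<dots> = {(\<lambda>j. \<Sum>w\<in>L ` V. c w * w j) | c. (\<forall>w\<in>L ` V. 0 \<le> c w) \<and> sum c (L ` V) = 1}"
      by (rule regroup[OF V(1)])
    finally have eq: "Q i = {(\<lambda>j. \<Sum>w\<in>L ` V. c w * w j) | c. (\<forall>w\<in>L ` V. 0 \<le> c w) \<and> sum c (L ` V) = 1}" .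
    have "finite (L ` V)" using V(1) by (rule finite_imageI)
    moreover have "L ` V \<subseteq> Rk m" using LRk by blast
    ultimately show ?thesis unfolding polytope_Rk_def using eq by (intro exI[of _ "L ` V"] conjI)
  qed
  have "realizable_in (minkowski_complex P \<mu> n) n m"
    unfolding realizable_in_def Delta
    using assms(1) poly LRk L0 by (intro exI[of _ Q] exI[of _ "L \<mu>"]) (auto simp: Q_def)
  then have "ctd (minkowski_complex P \<mu> n) n \<le> m" unfolding ctd_def by (rule Least_le)
  moreover have "m < CARD('d)" unfolding m_def by simp
  ultimately show ?thesis by simp
qed

end
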